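(* Let $G$ be a finite, simple, connected graph and let $v$ be a cut vertex of $G$. Then every resolving set for $G$ is disjoint from the vertex set of at most one connected component of $G\setminus\{v\}$. Moreover, if $W$ is a resolving set for $G$ that intersects the vertex sets of at least two distinct components of $G\setminus\{v\}$, then $W\setminus\{v\}$ is also a resolving set for $G$.
   Context: For vertices $x,y$ of a connected graph $G$, $d(x,y)$ denotes the length of a shortest $x$–$y$ path. A set $W\subseteq V(G)$ is a resolving set for $G$ if for every two distinct vertices $u,v\in V(G)$ there exists $w\in W$ with $d(u,w)\neq d(v,w)$. A vertex $v$ is a cut vertex of $G$ if the induced subgraph $G\setminus\{v\}$ on $V(G)\setminus\{v\}$ has at least two connected components. *)

theory Defs
  imports Main
begin

definition simple_graph :: "'a set \<Rightarrow> ('a \<Rightarrow> 'a \<Rightarrow> bool) \<Rightarrow> bool" where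
  "simple_graph V E \<longleftrightarrow> finite V \<and> (\<forall>x y. E x y \<longrightarrow> x \<in> V \<and> y \<in> V)
     \<and> (\<forall>x y. E x y \<longrightarrow> E y x) \<and> (\<forall>x. \<not> E x x)"

text \<open>A path in the subgraph induced on S: a nonempty list of distinct vertices of S,
  consecutive ones adjacent. Its length (number of edges) is length xs - 1.\<close>

definition path_in :: "'a set \<Rightarrow> ('a \<Rightarrow> 'a \<Rightarrow> bool) \<Rightarrow> 'a list \<Rightarrow> bool" where
  "path_in S E xs \<longleftrightarrow> xs \<noteq> [] \<and> set xs \<subseteq> S \<and> distinct xs
     \<and> (\<forall>i. Suc i < length xs \<longrightarrow> E (xs ! i) (xs ! Suc i))"

definition gdist :: "'a set \<Rightarrow> ('a \<Rightarrow> 'a \<Rightarrow> bool) \<Rightarrow> 'a \<Rightarrow> 'a \<Rightarrow> nat" where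
  "gdist V E x y = (LEAST n. \<exists>xs. path_in V E xs \<and> hd xs = x \<and> last xs = y \<and> length xs = Suc n)"

definition connected_graph :: "'a set \<Rightarrow> ('a \<Rightarrow> 'a \<Rightarrow> bool) \<Rightarrow> bool" where
  "connected_graph V E \<longleftrightarrow> V \<noteq> {} \<and>
     (\<forall>x\<in>V. \<forall>y\<in>V. \<exists>xs. path_in V E xs \<and> hd xs = x \<and> last xs = y)"

definition reach_in :: "'a set \<Rightarrow> ('a \<Rightarrow> 'a \<Rightarrow> bool) \<Rightarrow> 'a \<Rightarrow> 'a set" where
  "reach_in S E x = {y. \<exists>xs. path_in S E xs \<and> hd xs = x \<and> last xs = y}"

definition components_in :: "'a set \<Rightarrow> ('a \<Rightarrow> 'a \<Rightarrow> bool) \<Rightarrow> 'a set set" where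
  "components_in S E = reach_in S E ` S"

definition cut_vertex :: "'a set \<Rightarrow> ('a \<Rightarrow> 'a \<Rightarrow> bool) \<Rightarrow> 'a \<Rightarrow> bool" where
  "cut_vertex V E v \<longleftrightarrow> v \<in> V \<and>
     (\<exists>C1 \<in> components_in (V - {v}) E. \<exists>C2 \<in> components_in (V - {v}) E. C1 \<noteq> C2)"

definition resolving_set :: "'a set \<Rightarrow> ('a \<Rightarrow> 'a \<Rightarrow> bool) \<Rightarrow> 'a set \<Rightarrow> bool" where
  "resolving_set V E W \<longleftrightarrow> W \<subseteq> V \<and>
     (\<forall>u\<in>V. \<forall>w\<in>V. u \<noteq> w \<longrightarrow> (\<exists>z\<in>W. gdist V E u z \<noteq> gdist V E w z))"

end

theory Submission
  imports Defs
begin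

inductive walk :: "'a set \<Rightarrow> ('a \<Rightarrow> 'a \<Rightarrow> bool) \<Rightarrow> 'a \<Rightarrow> 'a \<Rightarrow> nat \<Rightarrow> bool" for S E where
  w0: "x \<in> S \<Longrightarrow> walk S E x x 0"
| wS: "E x y \<Longrightarrow> x \<in> S \<Longrightarrow> walk S E y z n \<Longrightarrow> walk S E x z (Suc n)"

lemma walk_in: "walk S E x y n \<Longrightarrow> x \<in> S \<and> y \<in> S"
  by (induct rule: walk.induct) auto

lemma walk_0: "walk S E x y 0 \<Longrightarrow> x = y"
  by (auto elim: walk.cases)

lemma walk_app: "walk S E x y m \<Longrightarrow> walk S E y z n \<Longrightarrow> walk S E x z (m+n)"
  by (induct rule: walk.induct) (auto intro: walk.intros)

lemma walk_edge: "E x y \<Longrightarrow> x\<in>S \<Longrightarrow> y\<in>S \<Longrightarrow> walk S E x y 1"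
proof -
  assume "E x y" "x\<in>S" "y\<in>S"
  then have "walk S E x y (Suc 0)" by (intro wS[OF _ _ w0])
  then show ?thesis by simp
qed

lemma walk_rev: assumes sy: "\<forall>x y. E x y \<longrightarrow> E y x" shows "walk S E x y n \<Longrightarrow> walk S E y x n"
proof (induct rule: walk.induct)
  case (w0 x) then show ?case by (auto intro: walk.intros)
next
  case (wS x y z n)
  have "walk S E y x 1" using wS walk_in walk_edge sy by metis
  then show ?case using walk_app[of S E z y n x 1] wS by simp
qed

lemma path_single: "path_in S E [a] \<longleftrightarrow> a \<in> S"
  unfolding path_in_def by auto

lemma path_Cons: "xs \<noteq> [] \<Longrightarrow> path_in S E (a#xs) \<longleftrightarrow> a\<in>S \<and> a\<notin>set xs \<and> E a (hd xs) \<and> path_in S E xs"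
  unfolding path_in_def
proof (intro iffI; elim conjE; intro conjI)
  assume xs: "xs \<noteq> []" and h: "\<forall>i. Suc i < length (a # xs) \<longrightarrow> E ((a # xs) ! i) ((a # xs) ! Suc i)"
  show "E a (hd xs)" using h[rule_format, of 0] xs by (simp add: hd_conv_nth)
  show "\<forall>i. Suc i < length xs \<longrightarrow> E (xs ! i) (xs ! Suc i)"
    using h by (metis length_Cons nth_Cons_Suc Suc_less_eq)
next
  assume xs: "xs \<noteq> []" and h: "\<forall>i. Suc i < length xs \<longrightarrow> E (xs ! i) (xs ! Suc i)"
    and e: "E a (hd xs)"
  show "\<forall>i. Suc i < length (a # xs) \<longrightarrow> E ((a # xs) ! i) ((a # xs) ! Suc i)"
  proof (intro allI impI)
    fix i assume "Suc i < length (a # xs)"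
    then show "E ((a # xs) ! i) ((a # xs) ! Suc i)"
      using h e xs by (cases i) (auto simp: hd_conv_nth)
  qed
qed auto

lemma path_suffix: "path_in S E (as @ bs) \<Longrightarrow> bs \<noteq> [] \<Longrightarrow> path_in S E bs"
  unfolding path_in_def
proof (elim conjE, intro conjI)
  assume h: "\<forall>i. Suc i < length (as @ bs) \<longrightarrow> E ((as @ bs) ! i) ((as @ bs) ! Suc i)"
  show "\<forall>i. Suc i < length bs \<longrightarrow> E (bs ! i) (bs ! Suc i)"
  proof (intro allI impI)
    fix i assume "Suc i < length bs"
    then show "E (bs ! i) (bs ! Suc i)"
      using h[rule_format, of "length as + i"] by (simp add: nth_append)
  qed
qed auto

lemma path_walk: "path_in S E xs \<Longrightarrow> walk S E (hd xs) (last xs) (length xs - 1)"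
proof (induct xs)
  case Nil then show ?case by (simp add: path_in_def)
next
  case (Cons a xs)
  show ?case
  proof (cases "xs = []")
    case True then show ?thesis using Cons by (auto simp: path_single intro: walk.intros)
  next
    case False
    then have "a\<in>S" "E a (hd xs)" "path_in S E xs" using Cons path_Cons by metis+
    then have "walk S E a (last xs) (Suc (length xs - 1))"
      using Cons by (auto intro: walk.intros)
    then show ?thesis using False by simp
  qed
qed

lemma walk_path: "walk S E x y n \<Longrightarrow> \<exists>xs. path_in S E xs \<and> hd xs = x \<and> last xs = y \<and> length xs \<le> Suc n"
proof (induct rule: walk.induct)
  case (w0 x) then show ?case by (intro exI[of _ "[x]"]) (simp add: path_single)
next
  case (wS x y z n)
  then obtain ys where ys: "path_in S E ys" "hd ys = y" "last ys = z" "length ys \<le> Suc n" by blast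
  have ne: "ys \<noteq> []" using ys path_in_def by metis
  show ?case
  proof (cases "x \<in> set ys")
    case True
    then obtain as bs where eq: "ys = as @ x # bs" by (meson split_list)
    have "path_in S E (x#bs)" using path_suffix ys(1) eq by fastforce
    moreover have "last (x#bs) = z" using ys(3) eq by simp
    moreover have "length (x#bs) \<le> Suc (Suc n)" using ys(4) eq by simp
    ultimately show ?thesis by (intro exI[of _ "x#bs"]) simp
  next
    case False
    have "path_in S E (x#ys)" using path_Cons[OF ne] False ys wS by auto
    then show ?thesis using ys ne by (intro exI[of _ "x#ys"]) simp
  qed
qed

lemma res_D: "resolving_set V E W \<Longrightarrow> u\<in>V \<Longrightarrow> w\<in>V \<Longrightarrow> u\<noteq>w \<Longrightarrow> \<exists>z\<in>W. gdist V E u z \<noteq> gdist V E w z"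
  unfolding resolving_set_def by blast

lemma res_sub: "resolving_set V E W \<Longrightarrow> W \<subseteq> V"
  unfolding resolving_set_def by blast

lemma reach_walk: "reach_in S E a = {y. \<exists>n. walk S E a y n}"
  unfolding reach_in_def
  using walk_path path_walk by fastforce

locale cg =
  fixes V E
  assumes sg: "simple_graph V E" and con: "connected_graph V E"
begin

lemma sym: "E x y \<Longrightarrow> E y x" using sg simple_graph_def by metis
lemma irr: "\<not> E x x" using sg simple_graph_def by metis
lemma inV: "E x y \<Longrightarrow> x \<in> V \<and> y \<in> V" using sg simple_graph_def by metis

lemma dist_walk:
  assumes "x\<in>V" "y\<in>V" shows "walk V E x y (gdist V E x y)"
proof -
  obtain xs where xs: "path_in V E xs" "hd xs = x" "last xs = y"
    using con assms connected_graph_def by metis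
  have ne: "xs \<noteq> []" using xs path_in_def by metis
  let ?P = "\<lambda>n. \<exists>xs. path_in V E xs \<and> hd xs = x \<and> last xs = y \<and> length xs = Suc n"
  have "?P (length xs - 1)" using xs ne by (intro exI[of _ xs]) auto
  then have "?P (gdist V E x y)" unfolding gdist_def by (rule LeastI)
  then obtain ys where "path_in V E ys" "hd ys = x" "last ys = y" "length ys = Suc (gdist V E x y)"
    by blast
  then show ?thesis using path_walk by fastforce
qed

lemma dist_le: "walk V E x y n \<Longrightarrow> gdist V E x y \<le> n"
proof -
  assume "walk V E x y n"
  then obtain xs where xs: "path_in V E xs" "hd xs = x" "last xs = y" "length xs \<le> Suc n"
    using walk_path by metis
  have ne: "xs \<noteq> []" using xs path_in_def by metis
  then obtain m where m: "length xs = Suc m" by (cases xs) auto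
  have "gdist V E x y \<le> m" unfolding gdist_def
    by (rule Least_le) (use xs m in blast)
  then show ?thesis using m xs by simp
qed

lemma dist_sym: "x\<in>V \<Longrightarrow> y\<in>V \<Longrightarrow> gdist V E x y = gdist V E y x"
  using dist_le dist_walk walk_rev sym by (metis le_antisym)

lemma dist_tri: "x\<in>V \<Longrightarrow> y\<in>V \<Longrightarrow> z\<in>V \<Longrightarrow> gdist V E x z \<le> gdist V E x y + gdist V E y z"
  using dist_le dist_walk walk_app by metis

lemma dist_edge: "E x y \<Longrightarrow> gdist V E x y = 1"
proof -
  assume e: "E x y"
  have w: "walk V E x y 1" using walk_edge e inV by metis
  have "gdist V E x y \<le> 1" using dist_le[OF w] .
  moreover have "gdist V E x y \<noteq> 0"
  proof
    assume "gdist V E x y = 0"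
    then have "walk V E x y 0" using dist_walk inV e by metis
    then show False using walk_0 irr e by metis
  qed
  ultimately show ?thesis by simp
qed

lemma sep:
  "walk V E x y n \<Longrightarrow> x \<in> reach_in (V-{v}) E a \<Longrightarrow> y \<notin> reach_in (V-{v}) E a
   \<Longrightarrow> \<exists>p q. walk V E x v p \<and> walk V E v y q \<and> p+q = n"
proof (induction rule: walk.induct)
  case (w0 x) then show ?case by simp
next
  case (wS x x' y n)
  show ?case
  proof (cases "x' = v")
    case True
    have "walk V E x v 1" using walk_edge[of E x x' V] wS(1) inV True by metis
    moreover have "walk V E v y n" using wS(3) True by simp
    ultimately show ?thesis by fastforce
  next
    case False
    obtain m where m: "walk (V-{v}) E a x m" using wS.prems(1) reach_walk by fast
    have "x \<in> V - {v}" using walk_in m by metis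
    moreover have "x' \<in> V - {v}" using False inV wS(1) by auto
    ultimately have "walk (V-{v}) E x x' 1" using walk_edge wS(1) by metis
    then have "walk (V-{v}) E a x' (m+1)" using walk_app m by metis
    then have "x' \<in> reach_in (V-{v}) E a" using reach_walk by fast
    then obtain p q where "walk V E x' v p" "walk V E v y q" "p+q = n" using wS.IH wS.prems(2) by blast
    moreover have "walk V E x x' 1" using walk_edge[of E x x' V] wS(1) inV by metis
    ultimately have "walk V E x v (1+p)" "walk V E v y q" "(1+p)+q = Suc n" using walk_app by (metis, simp, simp)
    then show ?thesis by blast
  qed
qed

lemma nbr:
  "walk V E x y n \<Longrightarrow> x \<in> reach_in (V-{v}) E a \<Longrightarrow> y \<notin> reach_in (V-{v}) E a
   \<Longrightarrow> \<exists>u \<in> reach_in (V-{v}) E a. E u v"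
proof (induction rule: walk.induct)
  case (w0 x) then show ?case by simp
next
  case (wS x x' y n)
  show ?case
  proof (cases "x' = v")
    case True
    then show ?thesis using wS.prems(1) wS(1) by blast
  next
    case False
    obtain m where m: "walk (V-{v}) E a x m" using wS.prems(1) reach_walk by fast
    have "x \<in> V - {v}" using walk_in m by metis
    moreover have "x' \<in> V - {v}" using False inV wS(1) by auto
    ultimately have "walk (V-{v}) E x x' 1" using walk_edge wS(1) by metis
    then have "walk (V-{v}) E a x' (m+1)" using walk_app m by metis
    then have "x' \<in> reach_in (V-{v}) E a" using reach_walk by fast
    then show ?thesis using wS.IH wS.prems(2) by blast
  qed
qed

lemma comp_sub: "C \<in> components_in (V-{v}) E \<Longrightarrow> C \<subseteq> V - {v}"
  unfolding components_in_def reach_walk using walk_in by fast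

lemma comp_nonempty: "C \<in> components_in (V-{v}) E \<Longrightarrow> \<exists>a. a \<in> C \<and> C = reach_in (V-{v}) E a"
proof -
  assume "C \<in> components_in (V-{v}) E"
  then obtain a where a: "a \<in> V - {v}" "C = reach_in (V-{v}) E a"
    unfolding components_in_def by auto
  then have "a \<in> C" unfolding reach_walk by (auto intro: walk.intros)
  then show ?thesis using a by blast
qed

lemma reach_same: "y \<in> reach_in S E a \<Longrightarrow> reach_in S E y = reach_in S E a"
proof -
  assume "y \<in> reach_in S E a"
  then obtain m where m: "walk S E a y m" unfolding reach_walk by blast
  have sy: "\<forall>x y. E x y \<longrightarrow> E y x" using sym by blast
  have m': "walk S E y a m" using walk_rev[OF sy m] .
  show ?thesis
  proof (intro set_eqI iffI)
    fix z assume "z \<in> reach_in S E y"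
    then obtain k where "walk S E y z k" unfolding reach_walk by blast
    then have "walk S E a z (m+k)" using walk_app m by metis
    then show "z \<in> reach_in S E a" unfolding reach_walk by blast
  next
    fix z assume "z \<in> reach_in S E a"
    then obtain k where "walk S E a z k" unfolding reach_walk by blast
    then have "walk S E y z (m+k)" using walk_app m' by metis
    then show "z \<in> reach_in S E y" unfolding reach_walk by blast
  qed
qed

lemma comp_disj: "C1 \<in> components_in (V-{v}) E \<Longrightarrow> C2 \<in> components_in (V-{v}) E
   \<Longrightarrow> x \<in> C1 \<Longrightarrow> x \<in> C2 \<Longrightarrow> C1 = C2"
  using comp_nonempty reach_same by metis

lemma dist_split:
  assumes C: "C \<in> components_in (V-{v}) E" and x: "x \<in> C" and y: "y \<in> V" "y \<notin> C" and v: "v \<in> V"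
  shows "gdist V E x y = gdist V E x v + gdist V E v y"
proof -
  obtain a where a: "C = reach_in (V-{v}) E a" using comp_nonempty C by metis
  have xV: "x \<in> V" using comp_sub C x by blast
  obtain p q where "walk V E x v p" "walk V E v y q" "p+q = gdist V E x y"
    using sep[OF dist_walk[OF xV y(1)]] x y a by blast
  then have "gdist V E x v + gdist V E v y \<le> gdist V E x y" using dist_le
    by (metis add_mono)
  moreover have "gdist V E x y \<le> gdist V E x v + gdist V E v y" using dist_tri xV y v by metis
  ultimately show ?thesis by simp
qed

lemma comp_nbr:
  assumes C: "C \<in> components_in (V-{v}) E" and v: "v \<in> V"
  shows "\<exists>u\<in>C. E u v"
proof -
  obtain a where a: "a \<in> C" "C = reach_in (V-{v}) E a" using comp_nonempty C by metis
  have aV: "a \<in> V" using comp_sub C a by blast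
  have "v \<notin> C" using comp_sub C by blast
  then show ?thesis using nbr[OF dist_walk[OF aV v]] a by blast
qed

lemma dist_out:
  assumes C: "C \<in> components_in (V-{v}) E" and w: "w' \<in> C" and x: "x \<in> V" "x \<notin> C" and v: "v \<in> V"
  shows "gdist V E x w' = gdist V E x v + gdist V E v w'"
proof -
  have wV: "w' \<in> V" using comp_sub C w by blast
  have "gdist V E w' x = gdist V E w' v + gdist V E v x" using dist_split[OF C w x v] .
  then show ?thesis using dist_sym wV x v by simp
qed

lemma cross:
  assumes C1: "C1 \<in> components_in (V-{v}) E" and C2: "C2 \<in> components_in (V-{v}) E"
    and d: "C1 \<inter> C2 = {}" and v: "v \<in> V"
    and u: "u \<in> C1" and w: "w \<in> C2" and w1: "w1 \<in> C1" and w2: "w2 \<in> C2"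
    and ne: "gdist V E u v \<noteq> gdist V E w v"
  shows "gdist V E u w1 \<noteq> gdist V E w w1 \<or> gdist V E u w2 \<noteq> gdist V E w w2"
proof -
  have uV: "u \<in> V" "w \<in> V" "w1 \<in> V" "w2 \<in> V" using comp_sub C1 C2 u w w1 w2 by blast+
  have "w \<notin> C1" "u \<notin> C2" using d u w by blast+
  then have a: "gdist V E w w1 = gdist V E w v + gdist V E v w1"
    and b: "gdist V E u w2 = gdist V E u v + gdist V E v w2"
    using dist_out C1 C2 w1 w2 uV v by blast+
  have c: "gdist V E u w1 \<le> gdist V E u v + gdist V E v w1"
    and e: "gdist V E w w2 \<le> gdist V E w v + gdist V E v w2"
    using dist_tri uV v by blast+
  show ?thesis using a b c e ne by linarith
qed

end

theorem proposition2p2: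
  fixes V :: "'a set" and E :: "'a \<Rightarrow> 'a \<Rightarrow> bool" and v :: 'a
  assumes "simple_graph V E" and "connected_graph V E" and "cut_vertex V E v"
  shows "(\<forall>W. resolving_set V E W \<longrightarrow>
            (\<forall>C1 \<in> components_in (V - {v}) E. \<forall>C2 \<in> components_in (V - {v}) E.
               C1 \<inter> W = {} \<and> C2 \<inter> W = {} \<longrightarrow> C1 = C2))
       \<and> (\<forall>W. resolving_set V E W \<and>
            (\<exists>C1 \<in> components_in (V - {v}) E. \<exists>C2 \<in> components_in (V - {v}) E.
               C1 \<noteq> C2 \<and> C1 \<inter> W \<noteq> {} \<and> C2 \<inter> W \<noteq> {})
            \<longrightarrow> resolving_set V E (W - {v}))"
proof -
  interpret cg V E using assms(1,2) by (rule cg.intro)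
  have v: "v \<in> V" using assms(3) unfolding cut_vertex_def by blast
  have P1: "C1 = C2" if res: "resolving_set V E W" and C1: "C1 \<in> components_in (V - {v}) E"
    and C2: "C2 \<in> components_in (V - {v}) E" and d1: "C1 \<inter> W = {}" and d2: "C2 \<inter> W = {}" for W C1 C2
  proof (rule ccontr)
    assume neq: "C1 \<noteq> C2"
    obtain u1 where u1: "u1 \<in> C1" "E u1 v" using comp_nbr C1 v by blast
    obtain u2 where u2: "u2 \<in> C2" "E u2 v" using comp_nbr C2 v by blast
    have "u1 \<noteq> u2" using comp_disj C1 C2 u1 u2 neq by metis
    moreover have V: "u1 \<in> V" "u2 \<in> V" using inV u1 u2 by blast+
    ultimately obtain z where z: "z \<in> W" "gdist V E u1 z \<noteq> gdist V E u2 z"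
      using res_D[OF res] by blast
    have zV: "z \<in> V" "z \<notin> C1" "z \<notin> C2" using res_sub[OF res] z d1 d2 by blast+
    have "gdist V E u1 z = gdist V E u1 v + gdist V E v z" using dist_split[OF C1 u1(1) zV(1,2) v] .
    moreover have "gdist V E u2 z = gdist V E u2 v + gdist V E v z" using dist_split[OF C2 u2(1) zV(1,3) v] .
    ultimately show False using z dist_edge u1 u2 by simp
  qed
  have P2: "resolving_set V E (W - {v})" if res: "resolving_set V E W" and C1: "C1 \<in> components_in (V - {v}) E"
    and C2: "C2 \<in> components_in (V - {v}) E" and neq: "C1 \<noteq> C2"
    and w1: "w1 \<in> C1 \<inter> W" and w2: "w2 \<in> C2 \<inter> W" for W C1 C2 w1 w2
  proof -
    have disj: "C1 \<inter> C2 = {}" using comp_disj C1 C2 neq by blast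
    have wv: "w1 \<in> W - {v}" "w2 \<in> W - {v}" using w1 w2 comp_sub C1 C2 by blast+
    have w1V: "w1 \<in> V" "w2 \<in> V" using w1 w2 comp_sub C1 C2 by blast+
    have "\<exists>z\<in>W - {v}. gdist V E u z \<noteq> gdist V E w z" if uw: "u \<in> V" "w \<in> V" "u \<noteq> w" for u w
    proof -
      obtain z where z: "z \<in> W" "gdist V E u z \<noteq> gdist V E w z" using res_D[OF res] uw by blast
      show ?thesis
      proof (cases "z = v")
        case False then show ?thesis using z by blast
      next
        case True
        then have ne: "gdist V E u v \<noteq> gdist V E w v" using z by simp
        show ?thesis
        proof (cases "u \<notin> C1 \<and> w \<notin> C1")
          case True
          have "gdist V E u w1 = gdist V E u v + gdist V E v w1"
               "gdist V E w w1 = gdist V E w v + gdist V E v w1"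
            using dist_out[OF C1 _ _ _ v] w1 uw True by blast+
          then show ?thesis using ne wv by (intro bexI[of _ w1]) auto
        next
          case F1: False
          show ?thesis
          proof (cases "u \<notin> C2 \<and> w \<notin> C2")
            case True
            have "gdist V E u w2 = gdist V E u v + gdist V E v w2"
                 "gdist V E w w2 = gdist V E w v + gdist V E v w2"
              using dist_out[OF C2 _ _ _ v] w2 uw True by blast+
            then show ?thesis using ne wv by (intro bexI[of _ w2]) auto
          next
            case F2: False
            have "(u \<in> C1 \<and> w \<in> C2) \<or> (w \<in> C1 \<and> u \<in> C2)" using F1 F2 disj by blast
            then have "gdist V E u w1 \<noteq> gdist V E w w1 \<or> gdist V E u w2 \<noteq> gdist V E w w2"
            proof
              assume "u \<in> C1 \<and> w \<in> C2"
              then show ?thesis using cross[OF C1 C2 disj v _ _ _ _ ne] w1 w2 by blast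
            next
              assume "w \<in> C1 \<and> u \<in> C2"
              then show ?thesis using cross[OF C1 C2 disj v, of w u w1 w2] ne w1 w2 by fastforce
            qed
            then show ?thesis using wv by blast
          qed
        qed
      qed
    qed
    then show ?thesis using res_sub[OF res] unfolding resolving_set_def by blast
  qed
  show ?thesis using P1 P2 by blast
qed

end
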